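(* Let $(\Omega,\mathcal{F})$ be a measurable space, $\mathcal{P}$ a nonempty set of probability measures on it, $\hat{\mathbb{E}}[Z]=\sup_{P\in\mathcal{P}}E_P[Z]$, and let $X,Y$ be random variables with $\hat{\mathbb{E}}[X^2]+\hat{\mathbb{E}}[Y^2]<\infty$. Suppose $\overline{\mu}_X=\underline{\mu}_X=:\mu_X$, and let $\rho_Y=\frac12(\overline{\mu}_Y+\underline{\mu}_Y)$. Then $$\overline{C}(X,Y)=\hat{\mathbb{E}}[(X-\mu_X)(Y-\rho_Y)],\qquad \underline{C}(X,Y)=-\hat{\mathbb{E}}[-(X-\mu_X)(Y-\rho_Y)].$$
   Context: For a random variable $W$ with $\hat{\mathbb{E}}[W^2]<\infty$: $\overline{\mu}_W=\hat{\mathbb{E}}[W]$, $\underline{\mu}_W=-\hat{\mathbb{E}}[-W]$, $M_W=[\underline{\mu}_W,\overline{\mu}_W]$. Upper covariance $\overline{C}(X,Y)=\max_{\mu_2\in M_Y}\min_{\mu_1\in M_X}\hat{\mathbb{E}}[(X-\mu_1)(Y-\mu_2)]$; lower covariance $\underline{C}(X,Y)=\min_{\mu_2\in M_Y}\max_{\mu_1\in M_X}\left(-\hat{\mathbb{E}}[-(X-\mu_1)(Y-\mu_2)]\right)$. *)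

theory Defs
  imports "HOL-Probability.Probability"
begin

definition sl_exp :: "'a measure set \<Rightarrow> ('a \<Rightarrow> real) \<Rightarrow> real" where
  "sl_exp Ps Z = (SUP P\<in>Ps. integral\<^sup>L P Z)"

definition upper_mean :: "'a measure set \<Rightarrow> ('a \<Rightarrow> real) \<Rightarrow> real" where
  "upper_mean Ps W = sl_exp Ps W"

definition lower_mean :: "'a measure set \<Rightarrow> ('a \<Rightarrow> real) \<Rightarrow> real" where
  "lower_mean Ps W = - sl_exp Ps (\<lambda>w. - W w)"

definition mean_interval :: "'a measure set \<Rightarrow> ('a \<Rightarrow> real) \<Rightarrow> real set" where
  "mean_interval Ps W = {lower_mean Ps W .. upper_mean Ps W}"

definition upper_cov :: "'a measure set \<Rightarrow> ('a \<Rightarrow> real) \<Rightarrow> ('a \<Rightarrow> real) \<Rightarrow> real" where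
  "upper_cov Ps X Y =
     (SUP m2\<in>mean_interval Ps Y. INF m1\<in>mean_interval Ps X.
        sl_exp Ps (\<lambda>w. (X w - m1) * (Y w - m2)))"

definition lower_cov :: "'a measure set \<Rightarrow> ('a \<Rightarrow> real) \<Rightarrow> ('a \<Rightarrow> real) \<Rightarrow> real" where
  "lower_cov Ps X Y =
     (INF m2\<in>mean_interval Ps Y. SUP m1\<in>mean_interval Ps X.
        - sl_exp Ps (\<lambda>w. - ((X w - m1) * (Y w - m2))))"

end

theory Submission
  imports Defs
begin

lemma L2_facts:
  fixes Z :: "'a \<Rightarrow> real"
  assumes P: "prob_space P" and Zm: "Z \<in> borel_measurable P"
    and le: "(\<integral>\<^sup>+ w. ennreal ((Z w)\<^sup>2) \<partial>P) \<le> S" and fin: "S < \<infinity>"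
  shows "integrable P (\<lambda>w. (Z w)\<^sup>2)" "integrable P Z" "\<bar>integral\<^sup>L P Z\<bar> \<le> 1 + enn2real S"
proof -
  interpret prob_space P by (rule P)
  have m2: "(\<lambda>w. (Z w)\<^sup>2) \<in> borel_measurable P" using Zm by measurable
  show i2: "integrable P (\<lambda>w. (Z w)\<^sup>2)"
    unfolding integrable_iff_bounded using m2 le fin by auto
  show i1: "integrable P Z" by (rule square_integrable_imp_integrable[OF Zm i2])
  have "\<bar>integral\<^sup>L P Z\<bar> \<le> integral\<^sup>L P (\<lambda>w. \<bar>Z w\<bar>)" by (rule integral_abs_bound)
  also have "\<dots> \<le> integral\<^sup>L P (\<lambda>w. 1 + (Z w)\<^sup>2)"
  proof (rule integral_mono)
    show "integrable P (\<lambda>w. \<bar>Z w\<bar>)" using i1 by auto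
    show "integrable P (\<lambda>w. 1 + (Z w)\<^sup>2)" using i2 by auto
    fix w show "\<bar>Z w\<bar> \<le> 1 + (Z w)\<^sup>2"
      using zero_le_power2[of "\<bar>Z w\<bar> - 1/2"] unfolding power2_eq_square
      by (simp add: abs_mult_self_eq algebra_simps)
  qed
  also have "\<dots> = 1 + integral\<^sup>L P (\<lambda>w. (Z w)\<^sup>2)" using i2 by (simp add: prob_space)
  also have "integral\<^sup>L P (\<lambda>w. (Z w)\<^sup>2) = enn2real (\<integral>\<^sup>+ w. ennreal ((Z w)\<^sup>2) \<partial>P)"
    using integral_eq_nn_integral[OF m2] by simp
  also have "\<dots> \<le> enn2real S" using le fin by (simp add: enn2real_mono)
  finally show "\<bar>integral\<^sup>L P Z\<bar> \<le> 1 + enn2real S" by simp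
qed

theorem corollary3p17:
  fixes M :: "'a measure" and Ps :: "'a measure set" and X Y :: "'a \<Rightarrow> real"
  assumes "Ps \<noteq> {}"
    and "\<And>P. P \<in> Ps \<Longrightarrow> prob_space P \<and> sets P = sets M"
    and "X \<in> borel_measurable M" and "Y \<in> borel_measurable M"
    and "(SUP P\<in>Ps. \<integral>\<^sup>+ w. ennreal ((X w)\<^sup>2) \<partial>P) + (SUP P\<in>Ps. \<integral>\<^sup>+ w. ennreal ((Y w)\<^sup>2) \<partial>P) < \<infinity>"
    and "upper_mean Ps X = lower_mean Ps X"
  shows "upper_cov Ps X Y =
           sl_exp Ps (\<lambda>w. (X w - upper_mean Ps X) * (Y w - (upper_mean Ps Y + lower_mean Ps Y) / 2))
    \<and> lower_cov Ps X Y =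
           - sl_exp Ps (\<lambda>w. - ((X w - upper_mean Ps X) * (Y w - (upper_mean Ps Y + lower_mean Ps Y) / 2)))"
proof -
  define SX where "SX = (SUP P\<in>Ps. \<integral>\<^sup>+ w. ennreal ((X w)\<^sup>2) \<partial>P)"
  define SY where "SY = (SUP P\<in>Ps. \<integral>\<^sup>+ w. ennreal ((Y w)\<^sup>2) \<partial>P)"
  have SXf: "SX < \<infinity>" and SYf: "SY < \<infinity>" using assms(5) unfolding SX_def SY_def
    by (auto simp: top_unique[symmetric] less_top)
  have Xm: "X \<in> borel_measurable P" and Ym: "Y \<in> borel_measurable P" and ps: "prob_space P"
    if "P \<in> Ps" for P
    using assms(2)[OF that] assms(3,4) measurable_cong_sets by blast+
  have leX: "(\<integral>\<^sup>+ w. ennreal ((X w)\<^sup>2) \<partial>P) \<le> SX" if "P \<in> Ps" for P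
    unfolding SX_def using that by (rule SUP_upper)
  have leY: "(\<integral>\<^sup>+ w. ennreal ((Y w)\<^sup>2) \<partial>P) \<le> SY" if "P \<in> Ps" for P
    unfolding SY_def using that by (rule SUP_upper)
  note FX = L2_facts[OF ps Xm leX SXf] and FY = L2_facts[OF ps Ym leY SYf]
  have bX: "bdd_above ((\<lambda>P. integral\<^sup>L P X) ` Ps)" "bdd_above ((\<lambda>P. - integral\<^sup>L P X) ` Ps)"
    using FX(3) unfolding bdd_above_def by (auto intro!: exI[of _ "1 + enn2real SX"] simp: abs_le_iff)
  have bY: "bdd_above ((\<lambda>P. integral\<^sup>L P Y) ` Ps)" "bdd_above ((\<lambda>P. - integral\<^sup>L P Y) ` Ps)"
    using FY(3) unfolding bdd_above_def by (auto intro!: exI[of _ "1 + enn2real SY"] simp: abs_le_iff)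
  define mu where "mu = upper_mean Ps X"
  have EX: "integral\<^sup>L P X = mu" if "P \<in> Ps" for P
  proof -
    have "integral\<^sup>L P X \<le> mu" unfolding mu_def upper_mean_def sl_exp_def
      using that bX(1) by (rule cSUP_upper[OF _ ])
    moreover have "- integral\<^sup>L P X \<le> - lower_mean Ps X"
      unfolding lower_mean_def sl_exp_def using cSUP_upper[OF that bX(2)] by simp
    ultimately show ?thesis using assms(6) unfolding mu_def by linarith
  qed
  have MX: "mean_interval Ps X = {mu}"
    unfolding mean_interval_def mu_def using assms(6) by simp
  obtain P0 where P0: "P0 \<in> Ps" using assms(1) by blast
  have lY: "lower_mean Ps Y \<le> upper_mean Ps Y"
  proof -
    have "- integral\<^sup>L P0 Y \<le> sl_exp Ps (\<lambda>w. - Y w)"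
      unfolding sl_exp_def using cSUP_upper[OF P0 bY(2)] by simp
    moreover have "integral\<^sup>L P0 Y \<le> sl_exp Ps Y"
      unfolding sl_exp_def using cSUP_upper[OF P0 bY(1)] by simp
    ultimately show ?thesis unfolding lower_mean_def upper_mean_def by linarith
  qed
  define rho where "rho = (upper_mean Ps Y + lower_mean Ps Y) / 2"
  have IY: "mean_interval Ps Y \<noteq> {}" unfolding mean_interval_def using lY by simp
  have key: "integral\<^sup>L P (\<lambda>w. (X w - mu) * (Y w - b)) = integral\<^sup>L P (\<lambda>w. (X w - mu) * Y w)"
    if P: "P \<in> Ps" for P b
  proof -
    interpret prob_space P using ps[OF P] .
    have iXY: "integrable P (\<lambda>w. X w * Y w)"
    proof (rule Bochner_Integration.integrable_bound[of _ "\<lambda>w. (X w)\<^sup>2 + (Y w)\<^sup>2"])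
      show "integrable P (\<lambda>w. (X w)\<^sup>2 + (Y w)\<^sup>2)" using FX(1)[OF P P P] FY(1)[OF P P P] by auto
      show "(\<lambda>w. X w * Y w) \<in> borel_measurable P" using Xm[OF P] Ym[OF P] by measurable
      show "AE w in P. norm (X w * Y w) \<le> norm ((X w)\<^sup>2 + (Y w)\<^sup>2)"
      proof (rule AE_I2)
        fix w
        have "2 * \<bar>X w\<bar> * \<bar>Y w\<bar> \<le> (X w)\<^sup>2 + (Y w)\<^sup>2"
          using sum_squares_bound[of "\<bar>X w\<bar>" "\<bar>Y w\<bar>"] by simp
        moreover have "\<bar>X w\<bar> * \<bar>Y w\<bar> \<ge> 0" by simp
        ultimately have "\<bar>X w\<bar> * \<bar>Y w\<bar> \<le> (X w)\<^sup>2 + (Y w)\<^sup>2" by linarith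
        then show "norm (X w * Y w) \<le> norm ((X w)\<^sup>2 + (Y w)\<^sup>2)"
          by (simp add: abs_mult)
      qed
    qed
    have iXmY: "integrable P (\<lambda>w. (X w - mu) * Y w)"
      using iXY FY(2)[OF P P P] by (simp add: left_diff_distrib)
    have iXm: "integrable P (\<lambda>w. b * (X w - mu))" using FX(2)[OF P P P] by simp
    have eq: "(\<lambda>w. (X w - mu) * (Y w - b)) = (\<lambda>w. (X w - mu) * Y w - b * (X w - mu))"
      by (auto simp: algebra_simps)
    have "integral\<^sup>L P (\<lambda>w. b * (X w - mu)) = b * (integral\<^sup>L P X - mu)"
      using FX(2)[OF P P P] by (simp add: prob_space)
    also have "\<dots> = 0" using EX[OF P] by simp
    finally show ?thesis unfolding eq using iXmY iXm by simp
  qed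
  define C where "C = sl_exp Ps (\<lambda>w. (X w - mu) * (Y w - rho))"
  define D where "D = sl_exp Ps (\<lambda>w. - ((X w - mu) * (Y w - rho)))"
  have g0: "sl_exp Ps (\<lambda>w. (X w - mu) * (Y w - b)) = sl_exp Ps (\<lambda>w. (X w - mu) * (Y w - rho))" for b
    unfolding sl_exp_def
  proof (rule SUP_cong)
    fix P assume P: "P \<in> Ps"
    show "integral\<^sup>L P (\<lambda>w. (X w - mu) * (Y w - b)) = integral\<^sup>L P (\<lambda>w. (X w - mu) * (Y w - rho))"
      using key[OF P, of b] key[OF P, of rho] by simp
  qed simp
  have g: "sl_exp Ps (\<lambda>w. (X w - mu) * (Y w - b)) = C" for b
    unfolding C_def by (rule g0)
  have h0: "sl_exp Ps (\<lambda>w. - ((X w - mu) * (Y w - b))) = sl_exp Ps (\<lambda>w. - ((X w - mu) * (Y w - rho)))" for b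
    unfolding sl_exp_def
  proof (rule SUP_cong)
    fix P assume P: "P \<in> Ps"
    have "integral\<^sup>L P (\<lambda>w. - ((X w - mu) * (Y w - b))) = - integral\<^sup>L P (\<lambda>w. (X w - mu) * (Y w - b))"
      by (rule Bochner_Integration.integral_minus)
    also have "\<dots> = - integral\<^sup>L P (\<lambda>w. (X w - mu) * (Y w - rho))"
      using key[OF P, of b] key[OF P, of rho] by simp
    also have "\<dots> = integral\<^sup>L P (\<lambda>w. - ((X w - mu) * (Y w - rho)))"
      by (rule Bochner_Integration.integral_minus[symmetric])
    finally show "integral\<^sup>L P (\<lambda>w. - ((X w - mu) * (Y w - b))) = integral\<^sup>L P (\<lambda>w. - ((X w - mu) * (Y w - rho)))" .
  qed simp
  have h: "sl_exp Ps (\<lambda>w. - ((X w - mu) * (Y w - b))) = D" for b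
    unfolding D_def by (rule h0)
  have U: "upper_cov Ps X Y = C"
  proof -
    have "upper_cov Ps X Y = (SUP m2\<in>mean_interval Ps Y. C)"
      unfolding upper_cov_def MX g image_insert image_empty cInf_singleton ..
    also have "\<dots> = C"
      by (rule cSUP_const[OF IY])
    finally show ?thesis .
  qed
  have L: "lower_cov Ps X Y = - D"
  proof -
    have "lower_cov Ps X Y = (INF m2\<in>mean_interval Ps Y. - D)"
      unfolding lower_cov_def MX h image_insert image_empty cSup_singleton ..
    also have "\<dots> = - D"
      by (rule cINF_const[OF IY])
    finally show ?thesis .
  qed
  show ?thesis using U L unfolding C_def D_def mu_def rho_def by simp
qed

end
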